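(* If a graph $G$ contains a perfect matching, then $L(G)\le \frac{3}{2}\,l(G)$.
   Context: Graphs are finite, undirected, without loops or multiple edges. $\nu(G)$ denotes the maximum size of a matching of $G$; a matching is maximum if it has $\nu(G)$ edges. For $F\subseteq E(G)$, $G\setminus F$ is the graph with vertex set $V(G)$ and edge set $E(G)\setminus F$. Define $L(G)=\max\{\nu(G\setminus F): F \text{ a maximum matching of } G\}$ and $l(G)=\min\{\nu(G\setminus F): F \text{ a maximum matching of } G\}$. *)

theory Defs
  imports Complex_Main
begin

definition graph :: "'a set \<Rightarrow> 'a set set \<Rightarrow> bool" where
  "graph V E \<longleftrightarrow> finite V \<and> (\<forall>e\<in>E. \<exists>u v. e = {u, v} \<and> u \<noteq> v \<and> u \<in> V \<and> v \<in> V)"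

definition matching :: "'a set set \<Rightarrow> 'a set set \<Rightarrow> bool" where
  "matching E M \<longleftrightarrow> M \<subseteq> E \<and> (\<forall>e1\<in>M. \<forall>e2\<in>M. e1 \<noteq> e2 \<longrightarrow> e1 \<inter> e2 = {})"

definition nu :: "'a set set \<Rightarrow> nat" where
  "nu E = Max {card M | M. matching E M}"

definition max_matching :: "'a set set \<Rightarrow> 'a set set \<Rightarrow> bool" where
  "max_matching E M \<longleftrightarrow> matching E M \<and> card M = nu E"

definition perfect_matching :: "'a set \<Rightarrow> 'a set set \<Rightarrow> 'a set set \<Rightarrow> bool" where
  "perfect_matching V E M \<longleftrightarrow> matching E M \<and> \<Union>M = V"

text \<open>G \ F has the same vertex set and edge set E - F; its matching number
  depends only on the edge set.\<close>
definition L_num :: "'a set set \<Rightarrow> nat" where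
  "L_num E = Max {nu (E - F) | F. max_matching E F}"

definition l_num :: "'a set set \<Rightarrow> nat" where
  "l_num E = Min {nu (E - F) | F. max_matching E F}"

end

theory Submission
  imports Defs
begin

definition twosets :: "'a set set \<Rightarrow> bool" where
  "twosets E \<longleftrightarrow> (\<forall>e\<in>E. \<exists>u v. e = {u, v} \<and> u \<noteq> v)"

lemma card_union_match:
  assumes "twosets E" "matching E X" "finite X"
  shows "card (\<Union>X) = 2 * card X"
proof -
  have pw: "pairwise disjnt X"
    using assms(2) unfolding matching_def pairwise_def disjnt_def by blast
  have c2: "\<And>x. x \<in> X \<Longrightarrow> card x = 2"
    using assms(1,2) unfolding twosets_def matching_def by fastforce
  have fin: "\<And>x. x \<in> X \<Longrightarrow> finite x"
    using assms(1,2) unfolding twosets_def matching_def by fastforce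
  have "card (\<Union>X) = sum card X" by (rule card_Union_disjoint[OF pw fin])
  also have "\<dots> = sum (\<lambda>_. 2) X" using c2 by simp
  finally show ?thesis by simp
qed

lemma matching_mono: "matching E M \<Longrightarrow> M' \<subseteq> M \<Longrightarrow> matching E M'"
  unfolding matching_def by blast

lemma nu_facts:
  assumes "finite E"
  shows "finite {card M | M. matching E M}" "{card M | M. matching E M} \<noteq> {}"
proof -
  have "{card M | M. matching E M} \<subseteq> card ` Pow E" unfolding matching_def by auto
  then show "finite {card M | M. matching E M}" using assms finite_subset by blast
  have "matching E {}" unfolding matching_def by auto
  then show "{card M | M. matching E M} \<noteq> {}" by blast
qed

lemma nu_ge: "finite E \<Longrightarrow> matching E M \<Longrightarrow> card M \<le> nu E"
  unfolding nu_def using nu_facts by (intro Max_ge) auto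

lemma nu_attained: "finite E \<Longrightarrow> \<exists>M. matching E M \<and> card M = nu E"
proof -
  assume f: "finite E"
  have "nu E \<in> {card M | M. matching E M}" unfolding nu_def
    using nu_facts[OF f] by (rule Max_in)
  then show ?thesis by auto
qed

lemma core:
  assumes tw: "twosets E" and fE: "finite E"
    and F1: "matching E F1" and F2: "matching E F2" and cov: "\<Union>E \<subseteq> \<Union>F2"
    and M: "matching (E - F2) M"
  shows "\<exists>R. matching (E - F1) R \<and> 2 * card M \<le> 3 * card R"
proof -
  define A where "A = M \<inter> F1"
  define N where "N = M - F1"
  define S where "S = \<Union>A"
  define T where "T = {t\<in>F2. t \<inter> S \<noteq> {}}"
  define U where "U = \<Union>T"
  define Nu where "Nu = {e\<in>N. e \<inter> U = {}}"
  define Nc where "Nc = N - Nu"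
  define R where "R = T \<union> Nu"
  have ME: "M \<subseteq> E" "M \<inter> F2 = {}" using M unfolding matching_def by auto
  have Mpw: "\<And>e1 e2. e1 \<in> M \<Longrightarrow> e2 \<in> M \<Longrightarrow> e1 \<noteq> e2 \<Longrightarrow> e1 \<inter> e2 = {}"
    using M unfolding matching_def by auto
  have F1pw: "\<And>e1 e2. e1 \<in> F1 \<Longrightarrow> e2 \<in> F1 \<Longrightarrow> e1 \<noteq> e2 \<Longrightarrow> e1 \<inter> e2 = {}"
    using F1 unfolding matching_def by auto
  have F2pw: "\<And>e1 e2. e1 \<in> F2 \<Longrightarrow> e2 \<in> F2 \<Longrightarrow> e1 \<noteq> e2 \<Longrightarrow> e1 \<inter> e2 = {}"
    using F2 unfolding matching_def by auto
  have F2E: "F2 \<subseteq> E" using F2 unfolding matching_def by auto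
  have fM: "finite M" using ME fE finite_subset by blast
  have fA: "finite A" "finite N" using fM unfolding A_def N_def by auto
  have fT: "finite T" using F2E fE unfolding T_def by (auto intro: finite_subset)
  have fNu: "finite Nu" "finite Nc" using fA unfolding Nu_def Nc_def by auto
  have twT: "\<And>t. t \<in> T \<Longrightarrow> \<exists>u v. t = {u,v} \<and> u \<noteq> v"
    using tw F2E unfolding twosets_def T_def by blast
  have fU: "finite U" unfolding U_def using fT twT by fastforce
  have cardM: "card N + card A = card M"
  proof -
    have "M = N \<union> A" "N \<inter> A = {}" unfolding N_def A_def by auto
    then show ?thesis using fA card_Un_disjoint by (metis add.commute)
  qed
  have cardS: "card S = 2 * card A"
    unfolding S_def by (rule card_union_match[OF tw _ fA(1)])
      (use ME F1 in \<open>auto simp: matching_def A_def\<close>)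
  have cardU: "card U = 2 * card T"
    unfolding U_def by (rule card_union_match[OF tw _ fT])
      (use F2 in \<open>auto simp: matching_def T_def\<close>)
  have SU: "S \<subseteq> U"
  proof
    fix s assume "s \<in> S"
    then obtain a where a: "a \<in> A" "s \<in> a" unfolding S_def by auto
    then have "s \<in> \<Union>E" using ME unfolding A_def by auto
    then obtain t where "t \<in> F2" "s \<in> t" using cov by auto
    then show "s \<in> U" unfolding U_def T_def using \<open>s \<in> S\<close> by auto
  qed
  have TF1: "T \<inter> F1 = {}"
  proof (rule ccontr)
    assume "T \<inter> F1 \<noteq> {}"
    then obtain t where t: "t \<in> T" "t \<in> F1" by auto
    then obtain s where s: "s \<in> t" "s \<in> S" unfolding T_def by auto
    then obtain a where a: "a \<in> A" "s \<in> a" unfolding S_def by auto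
    have "t = a" using F1pw[of t a] t a s unfolding A_def by auto
    then show False using t a ME unfolding A_def T_def by auto
  qed
  have NS: "\<And>e. e \<in> N \<Longrightarrow> e \<inter> S = {}"
  proof -
    fix e assume e: "e \<in> N"
    show "e \<inter> S = {}"
    proof (rule ccontr)
      assume "e \<inter> S \<noteq> {}"
      then obtain a s where "a \<in> A" "s \<in> a" "s \<in> e" unfolding S_def by auto
      then show False using Mpw[of e a] e unfolding A_def N_def by auto
    qed
  qed
  have Npw: "\<And>e1 e2. e1 \<in> N \<Longrightarrow> e2 \<in> N \<Longrightarrow> e1 \<noteq> e2 \<Longrightarrow> e1 \<inter> e2 = {}"
    using Mpw unfolding N_def by auto
  have c1: "card Nc \<le> card (U - S)"
  proof -
    define f where "f e = (SOME x. x \<in> e \<inter> U)" for e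
    have fe: "f e \<in> e \<inter> U" if "e \<in> Nc" for e
    proof -
      have "e \<inter> U \<noteq> {}" using that unfolding Nc_def Nu_def by auto
      then show ?thesis unfolding f_def by (metis ex_in_conv someI)
    qed
    have "inj_on f Nc"
    proof (rule inj_onI)
      fix x y assume "x \<in> Nc" "y \<in> Nc" "f x = f y"
      have "f x \<in> x \<inter> y" using fe[of x] fe[of y] \<open>f x = f y\<close> \<open>x \<in> Nc\<close> \<open>y \<in> Nc\<close> by auto
      moreover have "x \<in> N" "y \<in> N" using \<open>x \<in> Nc\<close> \<open>y \<in> Nc\<close> unfolding Nc_def by auto
      ultimately show "x = y" using Npw[of x y] by auto
    qed
    moreover have "f ` Nc \<subseteq> U - S"
    proof
      fix z assume "z \<in> f ` Nc"
      then obtain e where e: "e \<in> Nc" "z = f e" by auto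
      then have "e \<in> N" unfolding Nc_def by auto
      then show "z \<in> U - S" using fe[OF e(1)] e(2) NS[of e] by auto
    qed
    ultimately show ?thesis using card_inj_on_le fU by blast
  qed
  have c2: "card Nc \<le> card T"
  proof -
    define g where "g e = (SOME t. t \<in> T \<and> e \<inter> t \<noteq> {})" for e
    have ge: "g e \<in> T \<and> e \<inter> g e \<noteq> {}" if "e \<in> Nc" for e
    proof -
      have "\<exists>t. t \<in> T \<and> e \<inter> t \<noteq> {}" using that unfolding Nc_def Nu_def U_def by auto
      then show ?thesis unfolding g_def by (rule someI_ex)
    qed
    have "inj_on g Nc"
    proof (rule inj_onI)
      fix x y assume xy: "x \<in> Nc" "y \<in> Nc" "g x = g y"
      define t where "t = g x"
      have t: "t \<in> T" "x \<inter> t \<noteq> {}" "y \<inter> t \<noteq> {}" using ge xy unfolding t_def by auto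
      obtain u v where uv: "t = {u,v}" "u \<noteq> v" using twT t by blast
      obtain s where s: "s \<in> t" "s \<in> S" using t unfolding T_def by auto
      obtain a where a: "a \<in> x" "a \<in> t" using t by auto
      obtain b where b: "b \<in> y" "b \<in> t" using t by auto
      have xN: "x \<in> N" "y \<in> N" using xy(1,2) unfolding Nc_def by auto
      have "a \<notin> S" using NS[OF xN(1)] a(1) by blast
      moreover have "b \<notin> S" using NS[OF xN(2)] b(1) by blast
      ultimately have "a = b" using a(2) b(2) s uv by auto
      then have "a \<in> x \<inter> y" using a b by simp
      then show "x = y" using Npw[OF xN] by blast
    qed
    moreover have "g ` Nc \<subseteq> T" using ge by auto
    ultimately show ?thesis using card_inj_on_le fT by blast
  qed
  have cUS: "card (U - S) + card S = card U"
    using SU fU by (metis card_Diff_subset finite_subset le_add_diff_inverse2 card_mono)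
  have cN: "card Nu + card Nc = card N"
  proof -
    have "N = Nu \<union> Nc" "Nu \<inter> Nc = {}" unfolding Nc_def Nu_def by auto
    then show ?thesis using fNu card_Un_disjoint by metis
  qed
  have TNu: "T \<inter> Nu = {}"
  proof (rule ccontr)
    assume "T \<inter> Nu \<noteq> {}"
    then obtain t where t: "t \<in> T" "t \<in> Nu" by auto
    then have "t \<subseteq> U" "t \<inter> U = {}" "t \<noteq> {}" unfolding U_def Nu_def T_def by auto
    then show False by auto
  qed
  have cR: "card R = card T + card Nu"
    unfolding R_def using TNu fT fNu card_Un_disjoint by metis
  have "matching (E - F1) R"
    unfolding matching_def
  proof (intro conjI ballI impI)
    show "R \<subseteq> E - F1" using TF1 F2E ME unfolding R_def T_def Nu_def N_def by auto
  next
    fix e1 e2 assume e: "e1 \<in> R" "e2 \<in> R" "e1 \<noteq> e2"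
    show "e1 \<inter> e2 = {}"
    proof (cases "e1 \<in> T")
      case True
      then show ?thesis
      proof (cases "e2 \<in> T")
        case True
        then show ?thesis using \<open>e1 \<in> T\<close> F2pw e unfolding T_def by auto
      next
        case False
        then have "e2 \<in> Nu" using e unfolding R_def by auto
        then show ?thesis using \<open>e1 \<in> T\<close> unfolding Nu_def U_def by auto
      qed
    next
      case False
      then have e1: "e1 \<in> Nu" using e unfolding R_def by auto
      then show ?thesis
      proof (cases "e2 \<in> T")
        case True
        then show ?thesis using e1 unfolding Nu_def U_def by auto
      next
        case False
        then have "e2 \<in> Nu" using e unfolding R_def by auto
        then show ?thesis using e1 Npw e unfolding Nu_def by auto
      qed
    qed
  qed
  moreover have "2 * card M \<le> 3 * card R"
    using cardM cardS cardU c1 c2 cUS cN cR by linarith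
  ultimately show ?thesis by blast
qed

theorem theorem2:
  fixes V :: "'a set" and E :: "'a set set"
  assumes "graph V E"
    and "\<exists>M. perfect_matching V E M"
  shows "real (L_num E) \<le> 3 / 2 * real (l_num E)"
proof -
  have fV: "finite V" and eV: "\<And>e. e \<in> E \<Longrightarrow> \<exists>u v. e = {u, v} \<and> u \<noteq> v \<and> u \<in> V \<and> v \<in> V"
    using assms(1) unfolding graph_def by auto
  have tw: "twosets E" unfolding twosets_def using eV by blast
  have EV: "\<Union>E \<subseteq> V" using eV by blast
  have fE: "finite E"
  proof -
    have "E \<subseteq> Pow V" using EV by blast
    then show ?thesis using fV finite_subset by blast
  qed
  obtain M0 where M0: "matching E M0" "\<Union>M0 = V"
    using assms(2) unfolding perfect_matching_def by auto
  have fM0: "finite M0" using M0 fE unfolding matching_def by (auto intro: finite_subset)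
  have perf: "\<Union>F = V" if "max_matching E F" for F
  proof -
    have F: "matching E F" "card F = nu E" using that unfolding max_matching_def by auto
    have fF: "finite F" using F fE unfolding matching_def by (auto intro: finite_subset)
    have "card M0 \<le> card F" using nu_ge[OF fE M0(1)] F by simp
    then have "card V \<le> card (\<Union>F)"
      using card_union_match[OF tw M0(1) fM0] card_union_match[OF tw F(1) fF] M0(2) by simp
    moreover have "\<Union>F \<subseteq> V" using F EV unfolding matching_def by blast
    ultimately show ?thesis using fV by (meson card_seteq)
  qed
  define X where "X = {nu (E - F) | F. max_matching E F}"
  have finX: "finite X"
  proof -
    have "X \<subseteq> (\<lambda>F. nu (E - F)) ` Pow E" unfolding X_def max_matching_def matching_def by auto
    then show ?thesis using fE finite_subset by blast
  qed
  obtain F0 where "matching E F0" "card F0 = nu E" using nu_attained[OF fE] by blast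
  then have "max_matching E F0" unfolding max_matching_def by simp
  then have neX: "X \<noteq> {}" unfolding X_def by blast
  have "L_num E \<in> X" unfolding L_num_def X_def[symmetric] using finX neX by (rule Max_in)
  then obtain F2 where F2: "max_matching E F2" "L_num E = nu (E - F2)" unfolding X_def by auto
  have "l_num E \<in> X" unfolding l_num_def X_def[symmetric] using finX neX by (rule Min_in)
  then obtain F1 where F1: "max_matching E F1" "l_num E = nu (E - F1)" unfolding X_def by auto
  obtain M where M: "matching (E - F2) M" "card M = nu (E - F2)"
    using nu_attained[of "E - F2"] fE by auto
  have "\<Union>E \<subseteq> \<Union>F2" using perf[OF F2(1)] EV by simp
  then obtain R where R: "matching (E - F1) R" "2 * card M \<le> 3 * card R"
    using core[OF tw fE _ _ _ M(1), of F1] F1(1) F2(1) unfolding max_matching_def by blast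
  have "card R \<le> l_num E" using nu_ge[of "E - F1" R] fE R(1) F1(2) by auto
  then have "2 * L_num E \<le> 3 * l_num E" using R(2) M(2) F2(2) by linarith
  then show ?thesis by linarith
qed

end
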